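(* Let $q,d,m\ge 1$ be integers and $\varepsilon\in[0,1)$. For $j=1,\ldots,m$ let $S_j=\{s_{j,1},s_{j,2},\ldots,s_{j,d}\}\subseteq\mathbb{Z}_q$ be $\varepsilon$-biased sets of size $d$ with $s_{j,1}=0$. Let $\{\ket{\ell_1},\ldots,\ket{\ell_d}\}$ be an orthonormal basis of $\mathbb{C}^d$. For $x\in\mathbb{Z}_q=\{0,1,\ldots,q-1\}$ define \[ \ket{\psi_j(x)}=\frac{1}{\sqrt d}\Big(\ket{\ell_1}+e^{i2\pi s_{j,2}x/q}\ket{\ell_2}+\cdots+e^{i2\pi s_{j,d}x/q}\ket{\ell_d}\Big),\qquad \ket{\psi(x)}=\ket{\psi_1(x)}\otimes\cdots\otimes\ket{\psi_m(x)}\in(\mathbb{C}^d)^{\otimes m}. \] Then the map $\psi:\mathbb{Z}_q\to(\mathbb{C}^{d})^{\otimes m}\cong\mathcal{H}^{d^m}$ is a quantum $\left(\frac{d^m}{q},\varepsilon^m\right)$-resistant hash function; that is, $\frac{d^m}{q}\le\frac{d^m}{q}$ (the state space dimension $d^m$ divided by the input set size $q$) and for all $x_1\neq x_2$ in $\mathbb{Z}_q$, $\left|\braket{\psi(x_1)}{\psi(x_2)}\right|\le\varepsilon^m$.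
   Context: For $S=\{s_1,\ldots,s_d\}\subseteq\mathbb{Z}_q$ and $x\in\mathbb{Z}_q$, $\mathrm{bias}(S,x)=\frac{1}{|S|}\left|\sum_{s\in S}e^{2\pi i s x/q}\right|$; $S$ is $\varepsilon$-biased if $\mathrm{bias}(S,x)\le\varepsilon$ for all $x\ne 0$. Definition: for $\delta\in(0,1]$ and $\varepsilon\in[0,1)$, a function $\psi:\mathbb{X}\to\mathcal{H}^K$ (where $\mathcal{H}^K$ is a $K$-dimensional Hilbert space and $\mathbb{X}$ a finite set) is a quantum $(\delta,\varepsilon)$-resistant hash function if (i) ($\delta$-one-wayness) $K/|\mathbb{X}|\le\delta$, and (ii) ($\varepsilon$-collision-resistance) $|\braket{\psi(x_1)}{\psi(x_2)}|\le\varepsilon$ for every pair of distinct $x_1,x_2\in\mathbb{X}$. *)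

theory Defs
  imports Complex_Main
begin

text \<open>Elements of Z_q are represented by the naturals 0..q-1.\<close>

definition bias :: "nat \<Rightarrow> nat set \<Rightarrow> nat \<Rightarrow> real" where
  "bias q S x = cmod (\<Sum>s\<in>S. exp (2 * pi * \<i> * of_nat s * of_nat x / of_nat q)) / real (card S)"

definition eps_biased :: "nat \<Rightarrow> nat set \<Rightarrow> real \<Rightarrow> bool" where
  "eps_biased q S \<epsilon> \<longleftrightarrow> S \<subseteq> {0..<q} \<and> (\<forall>x\<in>{0..<q}. x \<noteq> 0 \<longrightarrow> bias q S x \<le> \<epsilon>)"

text \<open>A K-dimensional Hilbert space is represented concretely as functions on a finite
  index set I with card I = K, with the standard inner product (antilinear in the first slot).\<close>

definition cinner :: "'i set \<Rightarrow> ('i \<Rightarrow> complex) \<Rightarrow> ('i \<Rightarrow> complex) \<Rightarrow> complex" where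
  "cinner I u v = (\<Sum>i\<in>I. cnj (u i) * v i)"

definition quantum_resistant_hash ::
  "real \<Rightarrow> real \<Rightarrow> 'i set \<Rightarrow> 'x set \<Rightarrow> ('x \<Rightarrow> 'i \<Rightarrow> complex) \<Rightarrow> bool" where
  "quantum_resistant_hash \<delta> \<epsilon> I X \<psi> \<longleftrightarrow>
     finite I \<and> finite X \<and>
     real (card I) / real (card X) \<le> \<delta> \<and>
     (\<forall>x1\<in>X. \<forall>x2\<in>X. x1 \<noteq> x2 \<longrightarrow> cmod (cinner I (\<psi> x1) (\<psi> x2)) \<le> \<epsilon>)"

text \<open>Component state psi_j(x) in C^d (coordinates 0..d-1), given the elements
  s j k (k = 1..d) of S_j and an orthonormal basis l k (k = 1..d).\<close>

definition psi_comp :: "nat \<Rightarrow> nat \<Rightarrow> (nat \<Rightarrow> nat \<Rightarrow> nat) \<Rightarrow> (nat \<Rightarrow> nat \<Rightarrow> complex)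
    \<Rightarrow> nat \<Rightarrow> nat \<Rightarrow> nat \<Rightarrow> complex" where
  "psi_comp q d s l j x c =
     (1 / of_real (sqrt (real d))) *
     (\<Sum>k\<in>{1..d}. exp (2 * pi * \<i> * of_nat (s j k) * of_nat x / of_nat q) * l k c)"

text \<open>(C^d)^{\<otimes>m} is represented as functions on index tuples (lists of length m with
  entries < d); the tensor product of vectors v_1,...,v_m has coordinates
  prod_j v_j(c_j).\<close>

definition tensor_index :: "nat \<Rightarrow> nat \<Rightarrow> nat list set" where
  "tensor_index d m = {c. length c = m \<and> set c \<subseteq> {0..<d}}"

definition psi_tensor :: "nat \<Rightarrow> nat \<Rightarrow> nat \<Rightarrow> (nat \<Rightarrow> nat \<Rightarrow> nat) \<Rightarrow> (nat \<Rightarrow> nat \<Rightarrow> complex)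
    \<Rightarrow> nat \<Rightarrow> nat list \<Rightarrow> complex" where
  "psi_tensor q d m s l x c = (\<Prod>j\<in>{1..m}. psi_comp q d s l j x (c ! (j - 1)))"

end

theory Submission
  imports Defs "HOL-Analysis.Complex_Transcendental"
begin

lemma sum_lists_prod:
  fixes g :: "nat \<Rightarrow> 'a \<Rightarrow> complex"
  assumes A: "finite A"
  shows "(\<Sum>c\<in>{xs. set xs \<subseteq> A \<and> length xs = m}. \<Prod>j<m. g j (c!j)) = (\<Prod>j<m. \<Sum>a\<in>A. g j a)"
proof (induction m arbitrary: g)
  case 0
  have "{xs. set xs \<subseteq> A \<and> length xs = 0} = {[]}" by auto
  then show ?case by simp
next
  case (Suc m)
  have inj: "inj_on (\<lambda>(xs, n). n#xs) ({xs. set xs \<subseteq> A \<and> length xs = m} \<times> A)"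
    by (auto simp: inj_on_def)
  have "(\<Sum>c\<in>{xs. set xs \<subseteq> A \<and> length xs = Suc m}. \<Prod>j<Suc m. g j (c!j))
      = (\<Sum>(xs,a)\<in>{xs. set xs \<subseteq> A \<and> length xs = m} \<times> A. g 0 a * (\<Prod>j<m. g (Suc j) (xs!j)))"
    unfolding lists_length_Suc_eq
    by (subst sum.reindex[OF inj]) (simp add: case_prod_unfold prod.lessThan_Suc_shift del: prod.lessThan_Suc)
  also have "\<dots> = (\<Sum>xs\<in>{xs. set xs \<subseteq> A \<and> length xs = m}. \<Sum>a\<in>A. g 0 a * (\<Prod>j<m. g (Suc j) (xs!j)))"
    by (rule sum.cartesian_product[symmetric])
  also have "\<dots> = (\<Sum>a\<in>A. g 0 a * (\<Sum>xs\<in>{xs. set xs \<subseteq> A \<and> length xs = m}. (\<Prod>j<m. g (Suc j) (xs!j))))"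
    by (subst sum.swap) (simp add: sum_distrib_left)
  also have "\<dots> = (\<Sum>a\<in>A. g 0 a) * (\<Prod>j<m. \<Sum>a\<in>A. g (Suc j) a)"
    using Suc.IH[of "\<lambda>j. g (Suc j)"] by (simp add: sum_distrib_right)
  also have "\<dots> = (\<Prod>j<Suc m. \<Sum>a\<in>A. g j a)"
    by (simp add: prod.lessThan_Suc_shift del: prod.lessThan_Suc)
  finally show ?case .
qed

lemma cinner_sym: "cinner I u v = cnj (cinner I v u)"
  by (simp add: cinner_def mult.commute)

lemma comp_inner:
  assumes d: "d \<ge> 1"
    and orth: "\<And>k k'. k \<in> {1..d} \<Longrightarrow> k' \<in> {1..d} \<Longrightarrow>
           cinner {0..<d} (l k) (l k') = (if k = k' then 1 else 0)"
  shows "cinner {0..<d} (psi_comp q d s l j x1) (psi_comp q d s l j x2)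
    = (1 / of_nat d) * (\<Sum>k\<in>{1..d}. cnj (exp (complex_of_real (2 * pi) * \<i> * of_nat (s j k) * of_nat x1 / of_nat q))
         * exp (complex_of_real (2 * pi) * \<i> * of_nat (s j k) * of_nat x2 / of_nat q))"
proof -
  define a where "a k = exp (complex_of_real (2 * pi) * \<i> * of_nat (s j k) * of_nat x1 / of_nat q)" for k
  define b where "b k = exp (complex_of_real (2 * pi) * \<i> * of_nat (s j k) * of_nat x2 / of_nat q)" for k
  define r where "r = (1 / of_real (sqrt (real d)) :: complex)"
  have rr: "cnj r * r = 1 / of_nat d"
  proof -
    have "r = of_real (1 / sqrt (real d))" by (simp add: r_def)
    then have "cnj r * r = of_real (1 / sqrt (real d)) * of_real (1 / sqrt (real d))"
      by (simp only: Complex.complex_cnj_complex_of_real)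
    also have "\<dots> = of_real (1 / sqrt (real d) * (1 / sqrt (real d)))"
      by (simp only: of_real_mult)
    also have "1 / sqrt (real d) * (1 / sqrt (real d)) = 1 / real d"
      using d by (simp add: real_sqrt_mult[symmetric])
    finally show ?thesis by (simp del: of_real_mult)
  qed
  have "cinner {0..<d} (psi_comp q d s l j x1) (psi_comp q d s l j x2)
     = (\<Sum>c\<in>{0..<d}. cnj r * r * (\<Sum>k\<in>{1..d}. \<Sum>k'\<in>{1..d}. cnj (a k) * b k' * (cnj (l k c) * l k' c)))"
    unfolding cinner_def psi_comp_def a_def[symmetric] b_def[symmetric] r_def[symmetric]
    by (simp add: sum_distrib_left sum_distrib_right mult_ac)
  also have "\<dots> = cnj r * r * (\<Sum>k\<in>{1..d}. \<Sum>k'\<in>{1..d}. cnj (a k) * b k' * cinner {0..<d} (l k) (l k'))"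
    unfolding cinner_def
    by (simp add: sum_distrib_left sum.swap[of _ "{0..<d}"])
  also have "\<dots> = cnj r * r * (\<Sum>k\<in>{1..d}. \<Sum>k'\<in>{1..d}. if k = k' then cnj (a k) * b k' else 0)"
    by (intro arg_cong[where f="\<lambda>z. cnj r * r * z"] sum.cong refl) (simp add: orth)
  also have "\<dots> = (1 / of_nat d) * (\<Sum>k\<in>{1..d}. cnj (a k) * b k)"
    by (simp add: rr)
  finally show ?thesis by (simp add: a_def b_def)
qed

lemma phase:
  assumes "x1 \<le> x2"
  shows "cnj (exp (complex_of_real (2 * pi) * \<i> * of_nat t * of_nat x1 / of_nat q))
         * exp (complex_of_real (2 * pi) * \<i> * of_nat t * of_nat x2 / of_nat q)
       = exp (complex_of_real (2 * pi) * \<i> * of_nat t * of_nat (x2 - x1) / of_nat q)"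
proof -
  have "cnj (exp (complex_of_real (2 * pi) * \<i> * of_nat t * of_nat x1 / of_nat q))
      = exp (- (complex_of_real (2 * pi) * \<i> * of_nat t * of_nat x1 / of_nat q))"
    by (simp add: exp_cnj)
  moreover have "- (complex_of_real (2 * pi) * \<i> * of_nat t * of_nat x1 / of_nat q) + complex_of_real (2 * pi) * \<i> * of_nat t * of_nat x2 / of_nat q
      = (complex_of_real (2 * pi) * \<i> * of_nat t * of_nat (x2 - x1) / of_nat q :: complex)"
    using assms by (simp add: of_nat_diff right_diff_distrib left_diff_distrib diff_divide_distrib)
  ultimately show ?thesis by (simp add: exp_add[symmetric])
qed

lemma comp_bound:
  assumes d: "d \<ge> 1"
    and orth: "\<And>k k'. k \<in> {1..d} \<Longrightarrow> k' \<in> {1..d} \<Longrightarrow>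
           cinner {0..<d} (l k) (l k') = (if k = k' then 1 else 0)"
    and inj: "inj_on (s j) {1..d}"
    and eb: "eps_biased q (s j ` {1..d}) \<epsilon>"
    and x: "x1 < x2" "x2 < q"
  shows "cmod (cinner {0..<d} (psi_comp q d s l j x1) (psi_comp q d s l j x2)) \<le> \<epsilon>"
proof -
  have "cinner {0..<d} (psi_comp q d s l j x1) (psi_comp q d s l j x2)
    = (1 / of_nat d) * (\<Sum>k\<in>{1..d}. cnj (exp (complex_of_real (2 * pi) * \<i> * of_nat (s j k) * of_nat x1 / of_nat q))
         * exp (complex_of_real (2 * pi) * \<i> * of_nat (s j k) * of_nat x2 / of_nat q))"
    by (rule comp_inner[OF d orth])
  also have "(\<Sum>k\<in>{1..d}. cnj (exp (complex_of_real (2 * pi) * \<i> * of_nat (s j k) * of_nat x1 / of_nat q))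
         * exp (complex_of_real (2 * pi) * \<i> * of_nat (s j k) * of_nat x2 / of_nat q))
     = (\<Sum>k\<in>{1..d}. exp (complex_of_real (2 * pi) * \<i> * of_nat (s j k) * of_nat (x2 - x1) / of_nat q))"
    by (rule sum.cong[OF refl], rule phase) (use x in simp)
  also have "(\<Sum>k\<in>{1..d}. exp (complex_of_real (2 * pi) * \<i> * of_nat (s j k) * of_nat (x2 - x1) / of_nat q))
      = (\<Sum>t\<in>s j ` {1..d}. exp (complex_of_real (2 * pi) * \<i> * of_nat t * of_nat (x2 - x1) / of_nat q))"
    by (subst sum.reindex[OF inj]) (simp add: o_def)
  finally have "cmod (cinner {0..<d} (psi_comp q d s l j x1) (psi_comp q d s l j x2)) = bias q (s j ` {1..d}) (x2 - x1)"
    unfolding bias_def using card_image[OF inj] by (simp add: norm_mult norm_divide)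
  also have "\<dots> \<le> \<epsilon>" using eb x unfolding eps_biased_def by auto
  finally show ?thesis .
qed

lemma tensor_inner:
  "cinner (tensor_index d m) (psi_tensor q d m s l x1) (psi_tensor q d m s l x2)
   = (\<Prod>j\<in>{1..m}. cinner {0..<d} (psi_comp q d s l j x1) (psi_comp q d s l j x2))"
proof -
  define g where "g j a = cnj (psi_comp q d s l (Suc j) x1 a) * psi_comp q d s l (Suc j) x2 a" for j a
  have TI: "tensor_index d m = {xs. set xs \<subseteq> {0..<d} \<and> length xs = m}"
    unfolding tensor_index_def by auto
  have "cinner (tensor_index d m) (psi_tensor q d m s l x1) (psi_tensor q d m s l x2)
     = (\<Sum>c\<in>{xs. set xs \<subseteq> {0..<d} \<and> length xs = m}. \<Prod>j<m. g j (c!j))"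
    unfolding cinner_def TI psi_tensor_def
    by (intro sum.cong refl) (simp add: cnj_prod prod.distrib[symmetric] prod.atLeast1_atMost_eq g_def)
  also have "\<dots> = (\<Prod>j<m. \<Sum>a\<in>{0..<d}. g j a)"
    by (rule sum_lists_prod) simp
  also have "\<dots> = (\<Prod>j\<in>{1..m}. cinner {0..<d} (psi_comp q d s l j x1) (psi_comp q d s l j x2))"
    by (simp add: prod.atLeast1_atMost_eq g_def cinner_def)
  finally show ?thesis .
qed

theorem theorem1:
  fixes q d m :: nat and \<epsilon> :: real
    and s :: "nat \<Rightarrow> nat \<Rightarrow> nat" and l :: "nat \<Rightarrow> nat \<Rightarrow> complex"
  assumes "q \<ge> 1" and "d \<ge> 1" and "m \<ge> 1"
    and "0 \<le> \<epsilon>" and "\<epsilon> < 1"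
    and "\<And>j. j \<in> {1..m} \<Longrightarrow> inj_on (s j) {1..d}"
    and "\<And>j. j \<in> {1..m} \<Longrightarrow> s j ` {1..d} \<subseteq> {0..<q}"
    and "\<And>j. j \<in> {1..m} \<Longrightarrow> s j 1 = 0"
    and "\<And>j. j \<in> {1..m} \<Longrightarrow> eps_biased q (s j ` {1..d}) \<epsilon>"
    and "\<And>k k'. k \<in> {1..d} \<Longrightarrow> k' \<in> {1..d} \<Longrightarrow>
           cinner {0..<d} (l k) (l k') = (if k = k' then 1 else 0)"
  shows "quantum_resistant_hash (real d ^ m / real q) (\<epsilon> ^ m)
           (tensor_index d m) {0..<q} (psi_tensor q d m s l)"
proof -
  have TI: "tensor_index d m = {xs. set xs \<subseteq> {0..<d} \<and> length xs = m}"
    unfolding tensor_index_def by auto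
  have fin: "finite (tensor_index d m)" unfolding TI by (rule finite_lists_length_eq) simp
  have card: "card (tensor_index d m) = d ^ m" unfolding TI by (subst card_lists_length_eq) simp_all
  have lt: "cmod (cinner (tensor_index d m) (psi_tensor q d m s l x1) (psi_tensor q d m s l x2)) \<le> \<epsilon> ^ m"
    if "x1 < x2" "x2 < q" for x1 x2
  proof -
    have "cmod (cinner (tensor_index d m) (psi_tensor q d m s l x1) (psi_tensor q d m s l x2))
        = (\<Prod>j\<in>{1..m}. cmod (cinner {0..<d} (psi_comp q d s l j x1) (psi_comp q d s l j x2)))"
      by (simp add: tensor_inner prod_norm)
    also have "\<dots> \<le> (\<Prod>j\<in>{1..m}. \<epsilon>)"
      by (intro prod_mono conjI norm_ge_zero comp_bound[OF assms(2) assms(10)] assms(6) assms(9) that) auto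
    also have "\<dots> = \<epsilon> ^ m" by simp
    finally show ?thesis .
  qed
  have coll: "cmod (cinner (tensor_index d m) (psi_tensor q d m s l x1) (psi_tensor q d m s l x2)) \<le> \<epsilon> ^ m"
    if "x1 \<in> {0..<q}" "x2 \<in> {0..<q}" "x1 \<noteq> x2" for x1 x2
  proof (cases "x1 < x2")
    case True
    then show ?thesis using lt that by auto
  next
    case False
    then have "x2 < x1" using that by auto
    then show ?thesis using lt[of x2 x1] that
      by (subst cinner_sym) (simp only: complex_mod_cnj, auto)
  qed
  show ?thesis unfolding quantum_resistant_hash_def
    using fin card coll by simp
qed

end
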